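(* Let $T$ be an $X$-tree and suppose $x_1,\dots,x_6$ are six distinct elements of $X$ such that $x_1x_4$, $x_2x_5$, $x_3x_6$ are all $T$-cherries. Then $\mathcal{L}_1=\{x_1x_2,x_2x_3,x_3x_4,x_4x_5,x_5x_6,x_6x_1\}$ and $\mathcal{L}_2=\{x_1x_3,x_3x_4,x_4x_6,x_6x_1\}$ are circuits of $\mathbb{M}(T)$ while their symmetric difference $\{x_1x_2,x_2x_3,x_3x_1,x_4x_5,x_5x_6,x_6x_4\}$ is independent in $\mathbb{M}(T)$; consequently $\mathbb{M}(T)$ is not a binary matroid. In particular, if $T$ is a binary $X$-tree such that $\mathbb{M}(T)$ is a binary matroid, then $T$ is a caterpillar tree.
   Context: Let $X$ be a finite set with $|X|=n\ge 3$. An $X$-tree is a finite tree $T=(V,E)$ whose set of degree-1 vertices is exactly $X$ and which has no vertices of degree $2$; it is binary if all interior vertices have degree $3$, and a binary $X$-tree is a caterpillar tree if all its interior vertices lie on a single path of $T$. A cord is a $2$-subset $xy$ of $X$. For each cord $xy$, $\lambda^T_{xy}:\mathbb{R}^E\to\mathbb{R}$, $\omega\mapsto\sum_{e\in E(x|y)}\omega(e)$ where $E(x|y)$ is the edge set of the path from $x$ to $y$. $\mathbb{M}(T)$ is the matroid on $\binom{X}{2}$ represented over $\mathbb{R}$ by $xy\mapsto\lambda^T_{xy}$; circuits are minimal dependent sets. A binary matroid is one representable over the field with two elements. For $x\in X$, $e_x$ is the edge containing $x$; a cord $ab$ is a $T$-cherry if $e_a$ and $e_b$ share a vertex. *)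

theory Defs
  imports Complex_Main "HOL-Library.Z2"
begin

definition is_path :: "'v set \<Rightarrow> 'v set set \<Rightarrow> 'v list \<Rightarrow> bool" where
  "is_path V E ps \<longleftrightarrow> ps \<noteq> [] \<and> distinct ps \<and> set ps \<subseteq> V \<and>
     (\<forall>i. Suc i < length ps \<longrightarrow> {ps ! i, ps ! Suc i} \<in> E)"

definition is_tree :: "'v set \<Rightarrow> 'v set set \<Rightarrow> bool" where
  "is_tree V E \<longleftrightarrow> finite V \<and> V \<noteq> {} \<and> (\<forall>e\<in>E. e \<subseteq> V \<and> card e = 2) \<and>
     (\<forall>u\<in>V. \<forall>v\<in>V. \<exists>!ps. is_path V E ps \<and> hd ps = u \<and> last ps = v)"

definition degree :: "'v set set \<Rightarrow> 'v \<Rightarrow> nat" where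
  "degree E v = card {e\<in>E. v \<in> e}"

definition is_X_tree :: "'v set \<Rightarrow> 'v set set \<Rightarrow> 'v set \<Rightarrow> bool" where
  "is_X_tree V E X \<longleftrightarrow> is_tree V E \<and> X \<subseteq> V \<and> {v\<in>V. degree E v = 1} = X \<and>
     (\<forall>v\<in>V. degree E v \<noteq> 2)"

definition is_binary_X_tree :: "'v set \<Rightarrow> 'v set set \<Rightarrow> 'v set \<Rightarrow> bool" where
  "is_binary_X_tree V E X \<longleftrightarrow> is_X_tree V E X \<and> (\<forall>v\<in>V - X. degree E v = 3)"

definition is_caterpillar :: "'v set \<Rightarrow> 'v set set \<Rightarrow> 'v set \<Rightarrow> bool" where
  "is_caterpillar V E X \<longleftrightarrow> is_binary_X_tree V E X \<and>
     (\<exists>ps. is_path V E ps \<and> V - X \<subseteq> set ps)"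

definition path_edges :: "'v set \<Rightarrow> 'v set set \<Rightarrow> 'v \<Rightarrow> 'v \<Rightarrow> 'v set set" where
  "path_edges V E x y =
     (let ps = (THE ps. is_path V E ps \<and> hd ps = x \<and> last ps = y)
      in {{ps ! i, ps ! Suc i} | i. Suc i < length ps})"

definition cords :: "'v set \<Rightarrow> 'v set set" where
  "cords X = {{x, y} | x y. x \<in> X \<and> y \<in> X \<and> x \<noteq> y}"

definition is_cherry :: "'v set set \<Rightarrow> 'v \<Rightarrow> 'v \<Rightarrow> bool" where
  "is_cherry E a b \<longleftrightarrow> a \<noteq> b \<and>
     (\<exists>ea\<in>E. \<exists>eb\<in>E. a \<in> ea \<and> b \<in> eb \<and> ea \<inter> eb \<noteq> {})"

definition rep_indep :: "('c \<Rightarrow> 'i \<Rightarrow> 'k::comm_ring_1) \<Rightarrow> 'c set \<Rightarrow> bool" where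
  "rep_indep phi S \<longleftrightarrow>
     (\<forall>a. (\<forall>i. (\<Sum>c\<in>S. a c * phi c i) = 0) \<longrightarrow> (\<forall>c\<in>S. a c = 0))"

text \<open>lambda^T_{xy} as a vector in R^E (coefficient of omega(e)); zero outside E.\<close>
definition lam :: "'v set \<Rightarrow> 'v set set \<Rightarrow> 'v set \<Rightarrow> 'v set \<Rightarrow> real" where
  "lam V E c e = (if \<exists>x y. c = {x, y} \<and> e \<in> path_edges V E x y then 1 else 0)"

definition M_indep :: "'v set \<Rightarrow> 'v set set \<Rightarrow> 'v set \<Rightarrow> 'v set set \<Rightarrow> bool" where
  "M_indep V E X S \<longleftrightarrow> S \<subseteq> cords X \<and> rep_indep (lam V E) S"

definition M_circuit :: "'v set \<Rightarrow> 'v set set \<Rightarrow> 'v set \<Rightarrow> 'v set set \<Rightarrow> bool" where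
  "M_circuit V E X C \<longleftrightarrow> C \<subseteq> cords X \<and> \<not> M_indep V E X C \<and>
     (\<forall>D. D \<subset> C \<longrightarrow> M_indep V E X D)"

definition M_binary :: "'v set \<Rightarrow> 'v set set \<Rightarrow> 'v set \<Rightarrow> bool" where
  "M_binary V E X \<longleftrightarrow>
     (\<exists>phi :: 'v set \<Rightarrow> nat \<Rightarrow> bit.
        \<forall>S. S \<subseteq> cords X \<longrightarrow> (M_indep V E X S \<longleftrightarrow> rep_indep phi S))"

end

theory Submission
  imports Defs
begin


definition edgesof :: "'v list \<Rightarrow> 'v set set" where
  "edgesof ps = {{ps ! i, ps ! Suc i} | i. Suc i < length ps}"

locale xtree =
  fixes V :: "'v set" and E :: "'v set set" and X :: "'v set"
  assumes xt: "is_X_tree V E X"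
begin

lemma tree: "is_tree V E" using xt by (simp add: is_X_tree_def)
lemma finV: "finite V" using tree by (simp add: is_tree_def)
lemma edge_sub: "e \<in> E \<Longrightarrow> e \<subseteq> V" using tree by (simp add: is_tree_def)
lemma edge_card: "e \<in> E \<Longrightarrow> card e = 2" using tree by (simp add: is_tree_def)
lemma finE: "finite E"
proof -
  have "E \<subseteq> Pow V" using edge_sub by auto
  then show ?thesis using finV by (meson finite_Pow_iff finite_subset)
qed
lemma Xdef: "X = {v\<in>V. degree E v = 1}" using xt by (simp add: is_X_tree_def)
lemma leafD: "x \<in> X \<Longrightarrow> x \<in> V \<and> degree E x = 1" using Xdef by auto
lemma nondeg2: "v \<in> V \<Longrightarrow> degree E v \<noteq> 2" using xt by (simp add: is_X_tree_def)

lemma edge_ne: "{a,b} \<in> E \<Longrightarrow> a \<noteq> b"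
  using edge_card by fastforce
lemma edge_V: "{a,b} \<in> E \<Longrightarrow> a \<in> V \<and> b \<in> V"
  using edge_sub by auto

lemma edge_other: assumes "e \<in> E" "v \<in> e" shows "\<exists>t. t \<noteq> v \<and> e = {v,t} \<and> t \<in> V"
proof -
  obtain a b where ab: "e = {a,b}" "a \<noteq> b" using edge_card[OF assms(1)] card_2_iff by metis
  then show ?thesis using assms edge_sub[OF assms(1)] by (auto simp: insert_commute)
qed

lemma path_ex: "u \<in> V \<Longrightarrow> v \<in> V \<Longrightarrow> \<exists>ps. is_path V E ps \<and> hd ps = u \<and> last ps = v"
  using tree unfolding is_tree_def by blast

lemma path_hd_V: "is_path V E ps \<Longrightarrow> hd ps \<in> V \<and> last ps \<in> V"
  unfolding is_path_def by auto

lemma path_uniq: assumes "is_path V E ps" "is_path V E qs" "hd ps = hd qs" "last ps = last qs"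
  shows "ps = qs"
proof -
  have "hd ps \<in> V" "last ps \<in> V" using path_hd_V[OF assms(1)] by auto
  then have "\<exists>!ps. is_path V E ps \<and> hd ps = hd qs \<and> last ps = last qs"
    using tree assms unfolding is_tree_def by auto
  then show ?thesis using assms by blast
qed

lemma deg_ge2: assumes "{a,v} \<in> E" "{v,b} \<in> E" "a \<noteq> b" shows "degree E v \<ge> 2"
proof -
  have "{a,v} \<noteq> {v,b}" using assms edge_ne by (auto simp: doubleton_eq_iff)
  then have "card {{a,v},{v,b}} = 2" by simp
  moreover have "{{a,v},{v,b}} \<subseteq> {e\<in>E. v \<in> e}" using assms by auto
  moreover have "finite {e\<in>E. v \<in> e}" using finE by simp
  ultimately show ?thesis unfolding degree_def by (metis card_mono)
qed

lemma leaf_nb: assumes "degree E x = 1" "{x,w} \<in> E" "{x,w'} \<in> E" shows "w = w'"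
proof (rule ccontr)
  assume "w \<noteq> w'"
  then have "degree E x \<ge> 2" using deg_ge2[of w x w'] assms by (simp add: insert_commute)
  then show False using assms by simp
qed

lemma path_edge: "is_path V E ps \<Longrightarrow> Suc i < length ps \<Longrightarrow> {ps!i, ps!Suc i} \<in> E"
  unfolding is_path_def by auto

lemma leaf_not_interior: assumes "is_path V E ps" "degree E v = 1" "i < length ps" "ps!i = v"
  shows "i = 0 \<or> i = length ps - 1"
proof (rule ccontr)
  assume "\<not> ?thesis"
  then have i: "0 < i" "Suc i < length ps" using assms by auto
  obtain j where j: "i = Suc j" using i by (cases i) auto
  have e1: "{ps!j, v} \<in> E" using path_edge[OF assms(1), of j] i j assms by auto
  have e2: "{v, ps!Suc i} \<in> E" using path_edge[OF assms(1), of i] i assms by auto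
  have "ps!j \<noteq> ps!Suc i" using assms(1) i j unfolding is_path_def
    by (simp add: nth_eq_iff_index_eq)
  then have "degree E v \<ge> 2" using deg_ge2 e1 e2 by blast
  then show False using assms by simp
qed

lemma leaf_in_path: assumes "is_path V E ps" "degree E v = 1" "v \<in> set ps"
  shows "v = hd ps \<or> v = last ps"
proof -
  obtain i where i: "i < length ps" "ps!i = v" using assms(3) by (metis in_set_conv_nth)
  have ne: "ps \<noteq> []" using assms(1) by (simp add: is_path_def)
  show ?thesis using leaf_not_interior[OF assms(1,2) i] i ne
    by (auto simp: hd_conv_nth last_conv_nth)
qed

lemma path_take: "is_path V E ps \<Longrightarrow> 0 < k \<Longrightarrow> is_path V E (take k ps)"
  unfolding is_path_def by (auto dest: in_set_takeD)

lemma path_drop: "is_path V E ps \<Longrightarrow> k < length ps \<Longrightarrow> is_path V E (drop k ps)"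
  unfolding is_path_def by (auto dest: in_set_dropD simp: add.commute[of k])

lemma path_snoc: assumes "is_path V E ps" "t \<in> V" "t \<notin> set ps" "{last ps, t} \<in> E"
  shows "is_path V E (ps @ [t])"
  unfolding is_path_def
proof (intro conjI allI impI)
  show "ps @ [t] \<noteq> []" by simp
  show "distinct (ps @ [t])" using assms unfolding is_path_def by simp
  show "set (ps @ [t]) \<subseteq> V" using assms unfolding is_path_def by simp
  fix i assume i: "Suc i < length (ps @ [t])"
  show "{(ps @ [t]) ! i, (ps @ [t]) ! Suc i} \<in> E"
  proof (cases "Suc i < length ps")
    case True then show ?thesis using path_edge[OF assms(1) True] by (simp add: nth_append)
  next
    case False
    then have "i = length ps - 1" "ps \<noteq> []" using i assms(1) by (auto simp: is_path_def)
    then show ?thesis using assms(4) by (simp add: nth_append last_conv_nth)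
  qed
qed

lemma path_cons: assumes "is_path V E ps" "t \<in> V" "t \<notin> set ps" "{t, hd ps} \<in> E"
  shows "is_path V E (t # ps)"
  unfolding is_path_def
proof (intro conjI allI impI)
  show "t # ps \<noteq> []" by simp
  show "distinct (t # ps)" using assms unfolding is_path_def by simp
  show "set (t # ps) \<subseteq> V" using assms unfolding is_path_def by simp
  fix i assume i: "Suc i < length (t # ps)"
  show "{(t # ps) ! i, (t # ps) ! Suc i} \<in> E"
  proof (cases i)
    case 0 then show ?thesis using assms(1,4) by (simp add: is_path_def hd_conv_nth)
  next
    case (Suc j) then show ?thesis using path_edge[OF assms(1), of j] i by simp
  qed
qed

lemma path_two: "{a,b} \<in> E \<Longrightarrow> is_path V E [a,b]"
  unfolding is_path_def using edge_ne edge_V by (auto simp: less_Suc_eq)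

lemma path_one: "a \<in> V \<Longrightarrow> is_path V E [a]"
  unfolding is_path_def by auto

lemma path_rev: assumes "is_path V E ps" shows "is_path V E (rev ps)"
  unfolding is_path_def
proof (intro conjI allI impI)
  show "rev ps \<noteq> []" "distinct (rev ps)" "set (rev ps) \<subseteq> V" using assms unfolding is_path_def by auto
  fix i assume i: "Suc i < length (rev ps)"
  have "{ps ! (length ps - Suc (Suc i)), ps ! Suc (length ps - Suc (Suc i))} \<in> E"
    using path_edge[OF assms, of "length ps - Suc (Suc i)"] i by simp
  moreover have "Suc (length ps - Suc (Suc i)) = length ps - Suc i" using i by simp
  ultimately show "{rev ps ! i, rev ps ! Suc i} \<in> E" using i
    by (simp add: rev_nth insert_commute)
qed

lemma cycle: assumes "is_path V E ps" "i < j" "j < length ps" "{ps!i, ps!j} \<in> E"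
  shows "j = Suc i"
proof -
  define qs where "qs = drop i (take (Suc j) ps)"
  have "is_path V E qs" unfolding qs_def
    using path_drop[OF path_take[OF assms(1), of "Suc j"]] assms by simp
  moreover have "is_path V E [ps!i, ps!j]" using path_two assms(4) by simp
  moreover have "hd qs = ps!i" using assms by (simp add: qs_def hd_drop_conv_nth)
  moreover have "last qs = ps!j" using assms by (simp add: qs_def take_Suc_conv_app_nth)
  ultimately have "qs = [ps!i, ps!j]" using path_uniq by fastforce
  then have "length qs = 2" by simp
  then show ?thesis using assms by (simp add: qs_def)
qed

lemma pe_eq: assumes "is_path V E ps" shows "path_edges V E (hd ps) (last ps) = edgesof ps"
proof -
  have "(THE qs. is_path V E qs \<and> hd qs = hd ps \<and> last qs = last ps) = ps"
    using assms path_uniq by (intro the_equality) auto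
  then show ?thesis unfolding path_edges_def edgesof_def by (simp add: Let_def)
qed

lemma path_edges_ex: assumes "x \<in> V" "y \<in> V"
  obtains ps where "is_path V E ps" "hd ps = x" "last ps = y" "path_edges V E x y = edgesof ps"
  using path_ex[OF assms] pe_eq by blast

lemma edgesof_sub: "e \<in> edgesof t \<Longrightarrow> e \<subseteq> set t"
  unfolding edgesof_def by auto

lemma edgesof_Cons: assumes "t \<noteq> []" shows "edgesof (a # t) = insert {a, hd t} (edgesof t)"
proof
  show "edgesof (a # t) \<subseteq> insert {a, hd t} (edgesof t)"
  proof
    fix e assume "e \<in> edgesof (a # t)"
    then obtain i where i: "e = {(a#t)!i, (a#t)!Suc i}" "Suc i < length (a#t)"
      unfolding edgesof_def by blast
    show "e \<in> insert {a, hd t} (edgesof t)"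
    proof (cases i)
      case 0 then show ?thesis using i assms by (simp add: hd_conv_nth)
    next
      case (Suc j) then show ?thesis using i unfolding edgesof_def by auto
    qed
  qed
next
  show "insert {a, hd t} (edgesof t) \<subseteq> edgesof (a # t)"
  proof
    fix e assume "e \<in> insert {a, hd t} (edgesof t)"
    then consider "e = {a, hd t}" | "e \<in> edgesof t" by blast
    then show "e \<in> edgesof (a # t)"
    proof cases
      case 1
      then have "e = {(a#t)!0, (a#t)!Suc 0}" "Suc 0 < length (a#t)" using assms
        by (auto simp: hd_conv_nth)
      then show ?thesis unfolding edgesof_def by blast
    next
      case 2
      then obtain i where i: "e = {t!i, t!Suc i}" "Suc i < length t" unfolding edgesof_def by blast
      then have "e = {(a#t)!Suc i, (a#t)!Suc (Suc i)}" "Suc (Suc i) < length (a#t)" by auto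
      then show ?thesis unfolding edgesof_def by blast
    qed
  qed
qed

lemma edgesof_rev: "edgesof (rev ps) = edgesof ps"
proof -
  have *: "edgesof (rev qs) \<subseteq> edgesof qs" for qs
  proof
    fix e assume "e \<in> edgesof (rev qs)"
    then obtain i where i: "e = {rev qs!i, rev qs!Suc i}" "Suc i < length qs"
      unfolding edgesof_def by auto
    define j where "j = length qs - Suc (Suc i)"
    have "Suc j < length qs" "Suc j = length qs - Suc i" using i by (auto simp: j_def)
    moreover have "e = {qs!j, qs!Suc j}" using i calculation
      by (simp add: rev_nth j_def insert_commute)
    ultimately show "e \<in> edgesof qs" unfolding edgesof_def by blast
  qed
  show ?thesis using *[of ps] *[of "rev ps"] by auto
qed

lemma pe_sym: assumes "x \<in> V" "y \<in> V" shows "path_edges V E x y = path_edges V E y x"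
proof -
  obtain ps where ps: "is_path V E ps" "hd ps = x" "last ps = y" "path_edges V E x y = edgesof ps"
    using path_edges_ex[OF assms] by blast
  have ne: "ps \<noteq> []" using ps by (simp add: is_path_def)
  have "path_edges V E (hd (rev ps)) (last (rev ps)) = edgesof (rev ps)"
    using pe_eq[OF path_rev[OF ps(1)]] .
  then show ?thesis using ps ne by (simp add: hd_rev last_rev edgesof_rev)
qed

lemma path_len2: assumes "is_path V E ps" "hd ps \<noteq> last ps" shows "Suc (Suc 0) \<le> length ps"
proof (rule ccontr)
  assume "\<not> ?thesis"
  moreover have "ps \<noteq> []" using assms by (simp add: is_path_def)
  ultimately show False using assms by (cases ps) (auto simp: Suc_le_eq)
qed

lemma pend: assumes "degree E z = 1" "{z,w} \<in> E" "x \<in> V" "y \<in> V" "x \<noteq> y"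
  shows "{z,w} \<in> path_edges V E x y \<longleftrightarrow> z = x \<or> z = y"
proof -
  have first: "{z,w} \<in> path_edges V E z y'" if yh: "y' \<in> V" "y' \<noteq> z" for y'
  proof -
    have zV: "z \<in> V" using edge_V assms(2) by blast
    obtain ps where ps: "is_path V E ps" "hd ps = z" "last ps = y'" "path_edges V E z y' = edgesof ps"
      using path_edges_ex[OF zV yh(1)] by blast
    have l: "Suc (Suc 0) \<le> length ps" using path_len2 ps yh by simp
    have "{ps!0, ps!Suc 0} \<in> E" using path_edge[OF ps(1), of 0] l by simp
    moreover have "ps!0 = z" using ps l by (metis hd_conv_nth list.size(3) not_less_eq_eq zero_le)
    ultimately have "ps!Suc 0 = w" using leaf_nb[OF assms(1)] assms(2) by metis
    then have "{z,w} = {ps!0, ps!Suc 0}" using \<open>ps!0 = z\<close> by simp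
    then show ?thesis using ps l unfolding edgesof_def by force
  qed
  show ?thesis
  proof
    assume "{z,w} \<in> path_edges V E x y"
    obtain ps where ps: "is_path V E ps" "hd ps = x" "last ps = y" "path_edges V E x y = edgesof ps"
      using path_edges_ex[OF assms(3,4)] by blast
    have "{z,w} \<subseteq> set ps" using edgesof_sub ps \<open>{z,w} \<in> path_edges V E x y\<close> by metis
    then show "z = x \<or> z = y" using leaf_in_path[OF ps(1) assms(1)] ps by auto
  next
    assume "z = x \<or> z = y"
    then show "{z,w} \<in> path_edges V E x y"
    proof
      assume "z = x" then show ?thesis using first assms by auto
    next
      assume "z = y" then show ?thesis using first[of x] assms pe_sym by auto
    qed
  qed
qed

lemma swap: assumes "degree E x = 1" "degree E x' = 1" "{x,p} \<in> E" "{x',p} \<in> E"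
  "y \<in> V" "y \<noteq> x" "y \<noteq> x'"
  shows "path_edges V E x y - {{x,p}} = path_edges V E x' y - {{x',p}}"
proof -
  have xV: "x \<in> V" and x'V: "x' \<in> V" using edge_V assms(3,4) by auto
  obtain ps where ps: "is_path V E ps" "hd ps = x" "last ps = y" "path_edges V E x y = edgesof ps"
    using path_edges_ex[OF xV assms(5)] by blast
  have l: "Suc (Suc 0) \<le> length ps" using path_len2 ps assms by simp
  obtain t where t: "ps = x # t" using ps(2) l by (cases ps) auto
  have tne: "t \<noteq> []" using t l by auto
  have "{ps!0, ps!Suc 0} \<in> E" using path_edge[OF ps(1), of 0] l by simp
  then have "hd t = p" using t tne leaf_nb[OF assms(1)] assms(3) by (simp add: hd_conv_nth)
  have tp: "is_path V E t" using path_drop[OF ps(1), of 1] t tne by simp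
  have xt: "x \<notin> set t" using ps(1) t by (simp add: is_path_def)
  have x't: "x' \<notin> set t"
  proof
    assume "x' \<in> set t"
    then have "x' = hd t \<or> x' = last t" using leaf_in_path[OF tp assms(2)] by simp
    moreover have "last t = y" using ps(3) t tne by simp
    moreover have "x' \<noteq> p" using edge_ne assms(4) by blast
    ultimately show False using \<open>hd t = p\<close> assms by auto
  qed
  have qs: "is_path V E (x' # t)" using path_cons[OF tp x'V x't] \<open>hd t = p\<close> assms(4) by simp
  have "path_edges V E x' y = edgesof (x' # t)" using pe_eq[OF qs] ps(3) t tne by simp
  also have "\<dots> = insert {x',p} (edgesof t)" using edgesof_Cons[OF tne] \<open>hd t = p\<close> by simp
  finally have 1: "path_edges V E x' y - {{x',p}} = edgesof t"
    using x't edgesof_sub by fastforce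
  have "path_edges V E x y = insert {x,p} (edgesof t)"
    using ps(4) t edgesof_Cons[OF tne] \<open>hd t = p\<close> by simp
  then have 2: "path_edges V E x y - {{x,p}} = edgesof t"
    using xt edgesof_sub by fastforce
  show ?thesis using 1 2 by simp
qed

lemma swapm: assumes "degree E x = 1" "degree E x' = 1" "{x,p} \<in> E" "{x',p} \<in> E"
  "y \<in> V" "y \<noteq> x" "y \<noteq> x'" "e \<noteq> {x,p}" "e \<noteq> {x',p}"
  shows "e \<in> path_edges V E x y \<longleftrightarrow> e \<in> path_edges V E x' y"
  using swap[OF assms(1-7)] assms(8,9) by blast

lemma lam_eq: assumes "x \<in> V" "y \<in> V"
  shows "lam V E {x,y} e = (if e \<in> path_edges V E x y then 1 else 0)"
  unfolding lam_def using pe_sym[OF assms] by (auto simp: doubleton_eq_iff)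

lemma adj_leaves: assumes "degree E x = 1" "degree E y = 1" "{x,y} \<in> E" "z \<in> V" "z \<noteq> x" "z \<noteq> y"
  shows False
proof -
  have xV: "x \<in> V" using edge_V assms(3) by auto
  obtain ps where ps: "is_path V E ps" "hd ps = x" "last ps = z" using path_ex[OF xV assms(4)] by blast
  have l: "Suc (Suc 0) \<le> length ps" using path_len2 ps assms by simp
  have "{ps!0, ps!Suc 0} \<in> E" using path_edge[OF ps(1), of 0] l by simp
  moreover have "ps!0 = x" using ps l by (metis hd_conv_nth list.size(3) not_less_eq_eq zero_le)
  ultimately have 1: "ps!Suc 0 = y" using leaf_nb[OF assms(1)] assms(3) by metis
  have "length ps \<noteq> 2"
  proof
    assume "length ps = 2"
    then have "last ps = ps ! Suc 0" using last_conv_nth[of ps] by fastforce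
    then show False using 1 ps assms by simp
  qed
  then have l3: "Suc (Suc 0) < length ps" using l by simp
  have "{ps!Suc 0, ps!Suc (Suc 0)} \<in> E" using path_edge[OF ps(1), of "Suc 0"] l3 by simp
  then have "ps!Suc (Suc 0) = x" using 1 leaf_nb[OF assms(2)] assms(3) by (metis insert_commute)
  moreover have "ps!0 = x" using ps l by (metis hd_conv_nth list.size(3) not_less_eq_eq zero_le)
  moreover have "distinct ps" using ps(1) unfolding is_path_def by simp
  ultimately show False using l3 nth_eq_iff_index_eq[of ps 0 "Suc (Suc 0)"] by fastforce
qed

lemma cherry_nb: assumes "x \<in> X" "y \<in> X" "z \<in> V" "z \<noteq> x" "z \<noteq> y" "is_cherry E x y"
  shows "\<exists>p. {x,p} \<in> E \<and> {y,p} \<in> E"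
proof -
  obtain ea eb where e: "ea \<in> E" "eb \<in> E" "x \<in> ea" "y \<in> eb" "ea \<inter> eb \<noteq> {}" "x \<noteq> y"
    using assms(6) unfolding is_cherry_def by blast
  obtain a where a: "ea = {x,a}" "a \<noteq> x" using edge_other e by blast
  obtain b where b: "eb = {y,b}" "b \<noteq> y" using edge_other e by blast
  have dx: "degree E x = 1" and dy: "degree E y = 1" using leafD assms by auto
  have "\<not> {x,y} \<in> E" using adj_leaves[OF dx dy _ assms(3-5)] by blast
  then have "a = b" using e a b by (auto simp: insert_commute)
  then show ?thesis using e a b by blast
qed

end


context xtree begin
lemma lam_pend: assumes "degree E z = 1" "{z,w} \<in> E" "x \<in> V" "y \<in> V" "x \<noteq> y"
  shows "lam V E {x,y} {z,w} = (if z = x \<or> z = y then 1 else 0)"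
  using lam_eq[OF assms(3,4)] pend[OF assms] by simp
end

lemma rep_indep_mono: "rep_indep phi T \<Longrightarrow> S \<subseteq> T \<Longrightarrow> finite T \<Longrightarrow> rep_indep phi S"
  unfolding rep_indep_def
proof (intro allI impI ballI)
  fix a c
  assume H: "\<forall>a. (\<forall>i. (\<Sum>c\<in>T. a c * phi c i) = 0) \<longrightarrow> (\<forall>c\<in>T. a c = 0)"
    and S: "S \<subseteq> T" "finite T" and c: "c \<in> S" and z: "\<forall>i. (\<Sum>c\<in>S. a c * phi c i) = 0"
  define b where "b = (\<lambda>c. if c \<in> S then a c else 0)"
  have "(\<Sum>c\<in>T. b c * phi c i) = (\<Sum>c\<in>S. a c * phi c i)" for i
  proof -
    have "(\<Sum>c\<in>T. b c * phi c i) = (\<Sum>c\<in>T. if c \<in> S then a c * phi c i else 0)"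
      unfolding b_def by (intro sum.cong) auto
    also have "\<dots> = (\<Sum>c\<in>T \<inter> S. a c * phi c i)" using S by (simp add: sum.inter_restrict)
    also have "T \<inter> S = S" using S by auto
    finally show ?thesis .
  qed
  then have "\<forall>c\<in>T. b c = 0" using H z by auto
  then show "a c = 0" using c S unfolding b_def by (metis subsetD)
qed

lemma circ_sum:
  fixes phi :: "'c \<Rightarrow> 'i \<Rightarrow> bit"
  assumes fin: "finite C" and dep: "\<not> rep_indep phi C" and ind: "\<forall>c\<in>C. rep_indep phi (C - {c})"
  shows "\<forall>i. (\<Sum>c\<in>C. phi c i) = 0"
proof -
  obtain a c0 where a: "\<forall>i. (\<Sum>c\<in>C. a c * phi c i) = 0" and c0: "c0 \<in> C" "a c0 \<noteq> 0"
    using dep unfolding rep_indep_def by blast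
  have all1: "a c = 1" if c: "c \<in> C" for c
  proof (rule ccontr)
    assume "a c \<noteq> 1"
    then have ac: "a c = 0" by simp
    have "(\<Sum>x\<in>C - {c}. a x * phi x i) = 0" for i
      using sum_diff1[OF fin, of "\<lambda>x. a x * phi x i" c] a c ac by simp
    then have "\<forall>x\<in>C - {c}. a x = 0" using ind c unfolding rep_indep_def by blast
    moreover have "c0 \<in> C - {c}" using c0 ac by auto
    ultimately show False using c0 by blast
  qed
  show ?thesis
  proof
    fix i
    have "(\<Sum>c\<in>C. phi c i) = (\<Sum>c\<in>C. a c * phi c i)" using all1 by (intro sum.cong) auto
    then show "(\<Sum>c\<in>C. phi c i) = 0" using a by simp
  qed
qed

lemma bit_symdiff:
  fixes f :: "'c \<Rightarrow> bit"
  assumes "finite A" "finite B"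
  shows "sum f ((A - B) \<union> (B - A)) = sum f A + sum f B"
proof -
  have u1: "A = (A - B) \<union> (A \<inter> B)" and u2: "B = (B - A) \<union> (A \<inter> B)" by blast+
  have 1: "sum f A = sum f (A - B) + sum f (A \<inter> B)"
    by (subst u1, rule sum.union_disjoint) (use assms in auto)
  have 2: "sum f B = sum f (B - A) + sum f (A \<inter> B)"
    by (subst u2, rule sum.union_disjoint) (use assms in auto)
  have 3: "sum f ((A - B) \<union> (B - A)) = sum f (A - B) + sum f (B - A)"
    using assms by (intro sum.union_disjoint) auto
  have z: "x + x = 0" for x :: bit by (cases x) simp_all
  show ?thesis unfolding 3 by (subst 1, subst 2) (metis add.assoc add.commute add_0_right z)
qed

locale six = xtree +
  fixes x1 x2 x3 x4 x5 x6 p q r :: 'v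
  assumes inX: "x1 \<in> X" "x2 \<in> X" "x3 \<in> X" "x4 \<in> X" "x5 \<in> X" "x6 \<in> X"
  and dist: "distinct [x1,x2,x3,x4,x5,x6]"
  and e1: "{x1,p} \<in> E" and e4: "{x4,p} \<in> E" and e2: "{x2,q} \<in> E" and e5: "{x5,q} \<in> E"
  and e3: "{x3,r} \<in> E" and e6: "{x6,r} \<in> E"
begin

lemma deg: "degree E x1 = 1" "degree E x2 = 1" "degree E x3 = 1" "degree E x4 = 1"
  "degree E x5 = 1" "degree E x6 = 1" using leafD inX by auto
lemma inV: "x1 \<in> V" "x2 \<in> V" "x3 \<in> V" "x4 \<in> V" "x5 \<in> V" "x6 \<in> V" using leafD inX by auto
lemma ne: "x1 \<noteq> x2" "x1 \<noteq> x3" "x1 \<noteq> x4" "x1 \<noteq> x5" "x1 \<noteq> x6"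
  "x2 \<noteq> x3" "x2 \<noteq> x4" "x2 \<noteq> x5" "x2 \<noteq> x6" "x3 \<noteq> x4" "x3 \<noteq> x5" "x3 \<noteq> x6"
  "x4 \<noteq> x5" "x4 \<noteq> x6" "x5 \<noteq> x6"
  "x2 \<noteq> x1" "x3 \<noteq> x1" "x4 \<noteq> x1" "x5 \<noteq> x1" "x6 \<noteq> x1"
  "x3 \<noteq> x2" "x4 \<noteq> x2" "x5 \<noteq> x2" "x6 \<noteq> x2" "x4 \<noteq> x3" "x5 \<noteq> x3" "x6 \<noteq> x3"
  "x5 \<noteq> x4" "x6 \<noteq> x4" "x6 \<noteq> x5"
  using dist by auto

lemmas facts = deg inV ne e1 e2 e3 e4 e5 e6


lemma cls: assumes n: "e \<noteq> {x1,p}" "e \<noteq> {x2,q}" "e \<noteq> {x3,r}" "e \<noteq> {x4,p}" "e \<noteq> {x5,q}" "e \<noteq> {x6,r}"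
  shows "e \<in> path_edges V E x4 x5 \<longleftrightarrow> e \<in> path_edges V E x1 x2"
    "e \<in> path_edges V E x5 x6 \<longleftrightarrow> e \<in> path_edges V E x2 x3"
    "e \<in> path_edges V E x6 x1 \<longleftrightarrow> e \<in> path_edges V E x3 x4"
    "e \<in> path_edges V E x1 x3 \<longleftrightarrow> e \<in> path_edges V E x3 x4"
    "e \<in> path_edges V E x4 x6 \<longleftrightarrow> e \<in> path_edges V E x3 x4"
proof -
  note sw = swapm[OF _ _ _ _ _ _ _ _ _, of _ _ _ _ e]
  have s14: "e \<in> path_edges V E x1 y \<longleftrightarrow> e \<in> path_edges V E x4 y" if "y \<in> V" "y \<noteq> x1" "y \<noteq> x4" for y
    using swapm[of x1 x4 p y e] that facts n by simp
  have s25: "e \<in> path_edges V E x2 y \<longleftrightarrow> e \<in> path_edges V E x5 y" if "y \<in> V" "y \<noteq> x2" "y \<noteq> x5" for y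
    using swapm[of x2 x5 q y e] that facts n by simp
  have s36: "e \<in> path_edges V E x3 y \<longleftrightarrow> e \<in> path_edges V E x6 y" if "y \<in> V" "y \<noteq> x3" "y \<noteq> x6" for y
    using swapm[of x3 x6 r y e] that facts n by simp
  have sy: "path_edges V E a b = path_edges V E b a" if "a \<in> V" "b \<in> V" for a b
    using pe_sym that by simp
  show "e \<in> path_edges V E x4 x5 \<longleftrightarrow> e \<in> path_edges V E x1 x2"
    using s14[of x2] s25[of x4] sy[of x2 x4] sy[of x4 x5] facts by simp
  show "e \<in> path_edges V E x5 x6 \<longleftrightarrow> e \<in> path_edges V E x2 x3"
    using s25[of x3] s36[of x5] sy[of x3 x5] sy[of x5 x6] facts by simp
  show "e \<in> path_edges V E x6 x1 \<longleftrightarrow> e \<in> path_edges V E x3 x4"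
    using s36[of x4] s14[of x6] sy[of x4 x6] sy[of x6 x1] facts by simp
  show "e \<in> path_edges V E x1 x3 \<longleftrightarrow> e \<in> path_edges V E x3 x4"
    using s14[of x3] sy[of x3 x4] facts by simp
  show "e \<in> path_edges V E x4 x6 \<longleftrightarrow> e \<in> path_edges V E x3 x4"
    using s36[of x4] sy[of x4 x6] facts by simp
qed

definition "L1 = {{x1,x2}, {x2,x3}, {x3,x4}, {x4,x5}, {x5,x6}, {x6,x1}}"
definition "L2 = {{x1,x3}, {x3,x4}, {x4,x6}, {x6,x1}}"

lemma lamv: assumes "a \<in> V" "b \<in> V" shows "lam V E {a,b} e = (if e \<in> path_edges V E a b then 1 else 0)"
  using lam_eq assms by simp

lemma L1dep: "\<not> rep_indep (lam V E) L1"
proof -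
  define a where "a = (\<lambda>c. if c = {x1,x2} \<or> c = {x3,x4} \<or> c = {x5,x6} then 1 else (-1::real))"
  have "(\<Sum>c\<in>L1. a c * lam V E c e) = 0" for e
  proof -
    have "(\<Sum>c\<in>L1. a c * lam V E c e) = lam V E {x1,x2} e - lam V E {x2,x3} e + lam V E {x3,x4} e
       - lam V E {x4,x5} e + lam V E {x5,x6} e - lam V E {x6,x1} e"
      unfolding L1_def a_def using ne by (simp add: doubleton_eq_iff)
    also have "\<dots> = 0"
    proof (cases "e \<noteq> {x1,p} \<and> e \<noteq> {x2,q} \<and> e \<noteq> {x3,r} \<and> e \<noteq> {x4,p} \<and> e \<noteq> {x5,q} \<and> e \<noteq> {x6,r}")
      case True
      then show ?thesis using cls[of e] by (simp add: lamv inV)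
    next
      case False
      then show ?thesis by (auto simp: lam_pend facts)
    qed
    finally show ?thesis .
  qed
  moreover have "{x1,x2} \<in> L1" "a {x1,x2} \<noteq> 0" unfolding L1_def a_def by auto
  ultimately show ?thesis unfolding rep_indep_def by blast
qed

lemma L2dep: "\<not> rep_indep (lam V E) L2"
proof -
  define a where "a = (\<lambda>c. if c = {x1,x3} \<or> c = {x4,x6} then 1 else (-1::real))"
  have "(\<Sum>c\<in>L2. a c * lam V E c e) = 0" for e
  proof -
    have "(\<Sum>c\<in>L2. a c * lam V E c e) = lam V E {x1,x3} e - lam V E {x3,x4} e + lam V E {x4,x6} e
       - lam V E {x6,x1} e"
      unfolding L2_def a_def using ne by (simp add: doubleton_eq_iff)
    also have "\<dots> = 0"
    proof (cases "e \<noteq> {x1,p} \<and> e \<noteq> {x2,q} \<and> e \<noteq> {x3,r} \<and> e \<noteq> {x4,p} \<and> e \<noteq> {x5,q} \<and> e \<noteq> {x6,r}")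
      case True
      then show ?thesis using cls[of e] by (simp add: lamv inV)
    next
      case False
      then show ?thesis by (auto simp: lam_pend facts)
    qed
    finally show ?thesis .
  qed
  moreover have "{x1,x3} \<in> L2" "a {x1,x3} \<noteq> 0" unfolding L2_def a_def by auto
  ultimately show ?thesis unfolding rep_indep_def by blast
qed

lemma indL1_0: "rep_indep (lam V E) {{x2,x3}, {x3,x4}, {x4,x5}, {x5,x6}, {x6,x1}}"
  unfolding rep_indep_def
proof (intro allI impI)
  fix a assume H: "\<forall>i. (\<Sum>c\<in>{{x2,x3}, {x3,x4}, {x4,x5}, {x5,x6}, {x6,x1}}. a c * lam V E c i) = 0"
  have "(\<Sum>c\<in>{{x2,x3}, {x3,x4}, {x4,x5}, {x5,x6}, {x6,x1}}. a c * lam V E c {x1,p}) = 0" "(\<Sum>c\<in>{{x2,x3}, {x3,x4}, {x4,x5}, {x5,x6}, {x6,x1}}. a c * lam V E c {x2,q}) = 0"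
    "(\<Sum>c\<in>{{x2,x3}, {x3,x4}, {x4,x5}, {x5,x6}, {x6,x1}}. a c * lam V E c {x3,r}) = 0" "(\<Sum>c\<in>{{x2,x3}, {x3,x4}, {x4,x5}, {x5,x6}, {x6,x1}}. a c * lam V E c {x4,p}) = 0"
    "(\<Sum>c\<in>{{x2,x3}, {x3,x4}, {x4,x5}, {x5,x6}, {x6,x1}}. a c * lam V E c {x5,q}) = 0" "(\<Sum>c\<in>{{x2,x3}, {x3,x4}, {x4,x5}, {x5,x6}, {x6,x1}}. a c * lam V E c {x6,r}) = 0"
    using H by blast+
  then have eqs: "a {x2,x3} = 0 \<and> a {x3,x4} = 0 \<and> a {x4,x5} = 0 \<and> a {x5,x6} = 0 \<and> a {x6,x1} = 0"
    by (simp add: lam_pend facts doubleton_eq_iff)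
  then show "\<forall>c\<in>{{x2,x3}, {x3,x4}, {x4,x5}, {x5,x6}, {x6,x1}}. a c = 0" by simp
qed

lemma indL1_1: "rep_indep (lam V E) {{x1,x2}, {x3,x4}, {x4,x5}, {x5,x6}, {x6,x1}}"
  unfolding rep_indep_def
proof (intro allI impI)
  fix a assume H: "\<forall>i. (\<Sum>c\<in>{{x1,x2}, {x3,x4}, {x4,x5}, {x5,x6}, {x6,x1}}. a c * lam V E c i) = 0"
  have "(\<Sum>c\<in>{{x1,x2}, {x3,x4}, {x4,x5}, {x5,x6}, {x6,x1}}. a c * lam V E c {x1,p}) = 0" "(\<Sum>c\<in>{{x1,x2}, {x3,x4}, {x4,x5}, {x5,x6}, {x6,x1}}. a c * lam V E c {x2,q}) = 0"
    "(\<Sum>c\<in>{{x1,x2}, {x3,x4}, {x4,x5}, {x5,x6}, {x6,x1}}. a c * lam V E c {x3,r}) = 0" "(\<Sum>c\<in>{{x1,x2}, {x3,x4}, {x4,x5}, {x5,x6}, {x6,x1}}. a c * lam V E c {x4,p}) = 0"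
    "(\<Sum>c\<in>{{x1,x2}, {x3,x4}, {x4,x5}, {x5,x6}, {x6,x1}}. a c * lam V E c {x5,q}) = 0" "(\<Sum>c\<in>{{x1,x2}, {x3,x4}, {x4,x5}, {x5,x6}, {x6,x1}}. a c * lam V E c {x6,r}) = 0"
    using H by blast+
  then have eqs: "a {x1,x2} = 0 \<and> a {x3,x4} = 0 \<and> a {x4,x5} = 0 \<and> a {x5,x6} = 0 \<and> a {x6,x1} = 0"
    by (simp add: lam_pend facts doubleton_eq_iff)
  then show "\<forall>c\<in>{{x1,x2}, {x3,x4}, {x4,x5}, {x5,x6}, {x6,x1}}. a c = 0" by simp
qed

lemma indL1_2: "rep_indep (lam V E) {{x1,x2}, {x2,x3}, {x4,x5}, {x5,x6}, {x6,x1}}"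
  unfolding rep_indep_def
proof (intro allI impI)
  fix a assume H: "\<forall>i. (\<Sum>c\<in>{{x1,x2}, {x2,x3}, {x4,x5}, {x5,x6}, {x6,x1}}. a c * lam V E c i) = 0"
  have "(\<Sum>c\<in>{{x1,x2}, {x2,x3}, {x4,x5}, {x5,x6}, {x6,x1}}. a c * lam V E c {x1,p}) = 0" "(\<Sum>c\<in>{{x1,x2}, {x2,x3}, {x4,x5}, {x5,x6}, {x6,x1}}. a c * lam V E c {x2,q}) = 0"
    "(\<Sum>c\<in>{{x1,x2}, {x2,x3}, {x4,x5}, {x5,x6}, {x6,x1}}. a c * lam V E c {x3,r}) = 0" "(\<Sum>c\<in>{{x1,x2}, {x2,x3}, {x4,x5}, {x5,x6}, {x6,x1}}. a c * lam V E c {x4,p}) = 0"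
    "(\<Sum>c\<in>{{x1,x2}, {x2,x3}, {x4,x5}, {x5,x6}, {x6,x1}}. a c * lam V E c {x5,q}) = 0" "(\<Sum>c\<in>{{x1,x2}, {x2,x3}, {x4,x5}, {x5,x6}, {x6,x1}}. a c * lam V E c {x6,r}) = 0"
    using H by blast+
  then have eqs: "a {x1,x2} = 0 \<and> a {x2,x3} = 0 \<and> a {x4,x5} = 0 \<and> a {x5,x6} = 0 \<and> a {x6,x1} = 0"
    by (simp add: lam_pend facts doubleton_eq_iff)
  then show "\<forall>c\<in>{{x1,x2}, {x2,x3}, {x4,x5}, {x5,x6}, {x6,x1}}. a c = 0" by simp
qed

lemma indL1_3: "rep_indep (lam V E) {{x1,x2}, {x2,x3}, {x3,x4}, {x5,x6}, {x6,x1}}"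
  unfolding rep_indep_def
proof (intro allI impI)
  fix a assume H: "\<forall>i. (\<Sum>c\<in>{{x1,x2}, {x2,x3}, {x3,x4}, {x5,x6}, {x6,x1}}. a c * lam V E c i) = 0"
  have "(\<Sum>c\<in>{{x1,x2}, {x2,x3}, {x3,x4}, {x5,x6}, {x6,x1}}. a c * lam V E c {x1,p}) = 0" "(\<Sum>c\<in>{{x1,x2}, {x2,x3}, {x3,x4}, {x5,x6}, {x6,x1}}. a c * lam V E c {x2,q}) = 0"
    "(\<Sum>c\<in>{{x1,x2}, {x2,x3}, {x3,x4}, {x5,x6}, {x6,x1}}. a c * lam V E c {x3,r}) = 0" "(\<Sum>c\<in>{{x1,x2}, {x2,x3}, {x3,x4}, {x5,x6}, {x6,x1}}. a c * lam V E c {x4,p}) = 0"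
    "(\<Sum>c\<in>{{x1,x2}, {x2,x3}, {x3,x4}, {x5,x6}, {x6,x1}}. a c * lam V E c {x5,q}) = 0" "(\<Sum>c\<in>{{x1,x2}, {x2,x3}, {x3,x4}, {x5,x6}, {x6,x1}}. a c * lam V E c {x6,r}) = 0"
    using H by blast+
  then have eqs: "a {x1,x2} = 0 \<and> a {x2,x3} = 0 \<and> a {x3,x4} = 0 \<and> a {x5,x6} = 0 \<and> a {x6,x1} = 0"
    by (simp add: lam_pend facts doubleton_eq_iff)
  then show "\<forall>c\<in>{{x1,x2}, {x2,x3}, {x3,x4}, {x5,x6}, {x6,x1}}. a c = 0" by simp
qed

lemma indL1_4: "rep_indep (lam V E) {{x1,x2}, {x2,x3}, {x3,x4}, {x4,x5}, {x6,x1}}"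
  unfolding rep_indep_def
proof (intro allI impI)
  fix a assume H: "\<forall>i. (\<Sum>c\<in>{{x1,x2}, {x2,x3}, {x3,x4}, {x4,x5}, {x6,x1}}. a c * lam V E c i) = 0"
  have "(\<Sum>c\<in>{{x1,x2}, {x2,x3}, {x3,x4}, {x4,x5}, {x6,x1}}. a c * lam V E c {x1,p}) = 0" "(\<Sum>c\<in>{{x1,x2}, {x2,x3}, {x3,x4}, {x4,x5}, {x6,x1}}. a c * lam V E c {x2,q}) = 0"
    "(\<Sum>c\<in>{{x1,x2}, {x2,x3}, {x3,x4}, {x4,x5}, {x6,x1}}. a c * lam V E c {x3,r}) = 0" "(\<Sum>c\<in>{{x1,x2}, {x2,x3}, {x3,x4}, {x4,x5}, {x6,x1}}. a c * lam V E c {x4,p}) = 0"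
    "(\<Sum>c\<in>{{x1,x2}, {x2,x3}, {x3,x4}, {x4,x5}, {x6,x1}}. a c * lam V E c {x5,q}) = 0" "(\<Sum>c\<in>{{x1,x2}, {x2,x3}, {x3,x4}, {x4,x5}, {x6,x1}}. a c * lam V E c {x6,r}) = 0"
    using H by blast+
  then have eqs: "a {x1,x2} = 0 \<and> a {x2,x3} = 0 \<and> a {x3,x4} = 0 \<and> a {x4,x5} = 0 \<and> a {x6,x1} = 0"
    by (simp add: lam_pend facts doubleton_eq_iff)
  then show "\<forall>c\<in>{{x1,x2}, {x2,x3}, {x3,x4}, {x4,x5}, {x6,x1}}. a c = 0" by simp
qed

lemma indL1_5: "rep_indep (lam V E) {{x1,x2}, {x2,x3}, {x3,x4}, {x4,x5}, {x5,x6}}"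
  unfolding rep_indep_def
proof (intro allI impI)
  fix a assume H: "\<forall>i. (\<Sum>c\<in>{{x1,x2}, {x2,x3}, {x3,x4}, {x4,x5}, {x5,x6}}. a c * lam V E c i) = 0"
  have "(\<Sum>c\<in>{{x1,x2}, {x2,x3}, {x3,x4}, {x4,x5}, {x5,x6}}. a c * lam V E c {x1,p}) = 0" "(\<Sum>c\<in>{{x1,x2}, {x2,x3}, {x3,x4}, {x4,x5}, {x5,x6}}. a c * lam V E c {x2,q}) = 0"
    "(\<Sum>c\<in>{{x1,x2}, {x2,x3}, {x3,x4}, {x4,x5}, {x5,x6}}. a c * lam V E c {x3,r}) = 0" "(\<Sum>c\<in>{{x1,x2}, {x2,x3}, {x3,x4}, {x4,x5}, {x5,x6}}. a c * lam V E c {x4,p}) = 0"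
    "(\<Sum>c\<in>{{x1,x2}, {x2,x3}, {x3,x4}, {x4,x5}, {x5,x6}}. a c * lam V E c {x5,q}) = 0" "(\<Sum>c\<in>{{x1,x2}, {x2,x3}, {x3,x4}, {x4,x5}, {x5,x6}}. a c * lam V E c {x6,r}) = 0"
    using H by blast+
  then have eqs: "a {x1,x2} = 0 \<and> a {x2,x3} = 0 \<and> a {x3,x4} = 0 \<and> a {x4,x5} = 0 \<and> a {x5,x6} = 0"
    by (simp add: lam_pend facts doubleton_eq_iff)
  then show "\<forall>c\<in>{{x1,x2}, {x2,x3}, {x3,x4}, {x4,x5}, {x5,x6}}. a c = 0" by simp
qed

lemma indL2_0: "rep_indep (lam V E) {{x3,x4}, {x4,x6}, {x6,x1}}"
  unfolding rep_indep_def
proof (intro allI impI)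
  fix a assume H: "\<forall>i. (\<Sum>c\<in>{{x3,x4}, {x4,x6}, {x6,x1}}. a c * lam V E c i) = 0"
  have "(\<Sum>c\<in>{{x3,x4}, {x4,x6}, {x6,x1}}. a c * lam V E c {x1,p}) = 0" "(\<Sum>c\<in>{{x3,x4}, {x4,x6}, {x6,x1}}. a c * lam V E c {x2,q}) = 0"
    "(\<Sum>c\<in>{{x3,x4}, {x4,x6}, {x6,x1}}. a c * lam V E c {x3,r}) = 0" "(\<Sum>c\<in>{{x3,x4}, {x4,x6}, {x6,x1}}. a c * lam V E c {x4,p}) = 0"
    "(\<Sum>c\<in>{{x3,x4}, {x4,x6}, {x6,x1}}. a c * lam V E c {x5,q}) = 0" "(\<Sum>c\<in>{{x3,x4}, {x4,x6}, {x6,x1}}. a c * lam V E c {x6,r}) = 0"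
    using H by blast+
  then have eqs: "a {x3,x4} = 0 \<and> a {x4,x6} = 0 \<and> a {x6,x1} = 0"
    by (simp add: lam_pend facts doubleton_eq_iff)
  then show "\<forall>c\<in>{{x3,x4}, {x4,x6}, {x6,x1}}. a c = 0" by simp
qed

lemma indL2_1: "rep_indep (lam V E) {{x1,x3}, {x4,x6}, {x6,x1}}"
  unfolding rep_indep_def
proof (intro allI impI)
  fix a assume H: "\<forall>i. (\<Sum>c\<in>{{x1,x3}, {x4,x6}, {x6,x1}}. a c * lam V E c i) = 0"
  have "(\<Sum>c\<in>{{x1,x3}, {x4,x6}, {x6,x1}}. a c * lam V E c {x1,p}) = 0" "(\<Sum>c\<in>{{x1,x3}, {x4,x6}, {x6,x1}}. a c * lam V E c {x2,q}) = 0"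
    "(\<Sum>c\<in>{{x1,x3}, {x4,x6}, {x6,x1}}. a c * lam V E c {x3,r}) = 0" "(\<Sum>c\<in>{{x1,x3}, {x4,x6}, {x6,x1}}. a c * lam V E c {x4,p}) = 0"
    "(\<Sum>c\<in>{{x1,x3}, {x4,x6}, {x6,x1}}. a c * lam V E c {x5,q}) = 0" "(\<Sum>c\<in>{{x1,x3}, {x4,x6}, {x6,x1}}. a c * lam V E c {x6,r}) = 0"
    using H by blast+
  then have eqs: "a {x1,x3} = 0 \<and> a {x4,x6} = 0 \<and> a {x6,x1} = 0"
    by (simp add: lam_pend facts doubleton_eq_iff)
  then show "\<forall>c\<in>{{x1,x3}, {x4,x6}, {x6,x1}}. a c = 0" by simp
qed

lemma indL2_2: "rep_indep (lam V E) {{x1,x3}, {x3,x4}, {x6,x1}}"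
  unfolding rep_indep_def
proof (intro allI impI)
  fix a assume H: "\<forall>i. (\<Sum>c\<in>{{x1,x3}, {x3,x4}, {x6,x1}}. a c * lam V E c i) = 0"
  have "(\<Sum>c\<in>{{x1,x3}, {x3,x4}, {x6,x1}}. a c * lam V E c {x1,p}) = 0" "(\<Sum>c\<in>{{x1,x3}, {x3,x4}, {x6,x1}}. a c * lam V E c {x2,q}) = 0"
    "(\<Sum>c\<in>{{x1,x3}, {x3,x4}, {x6,x1}}. a c * lam V E c {x3,r}) = 0" "(\<Sum>c\<in>{{x1,x3}, {x3,x4}, {x6,x1}}. a c * lam V E c {x4,p}) = 0"
    "(\<Sum>c\<in>{{x1,x3}, {x3,x4}, {x6,x1}}. a c * lam V E c {x5,q}) = 0" "(\<Sum>c\<in>{{x1,x3}, {x3,x4}, {x6,x1}}. a c * lam V E c {x6,r}) = 0"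
    using H by blast+
  then have eqs: "a {x1,x3} = 0 \<and> a {x3,x4} = 0 \<and> a {x6,x1} = 0"
    by (simp add: lam_pend facts doubleton_eq_iff)
  then show "\<forall>c\<in>{{x1,x3}, {x3,x4}, {x6,x1}}. a c = 0" by simp
qed

lemma indL2_3: "rep_indep (lam V E) {{x1,x3}, {x3,x4}, {x4,x6}}"
  unfolding rep_indep_def
proof (intro allI impI)
  fix a assume H: "\<forall>i. (\<Sum>c\<in>{{x1,x3}, {x3,x4}, {x4,x6}}. a c * lam V E c i) = 0"
  have "(\<Sum>c\<in>{{x1,x3}, {x3,x4}, {x4,x6}}. a c * lam V E c {x1,p}) = 0" "(\<Sum>c\<in>{{x1,x3}, {x3,x4}, {x4,x6}}. a c * lam V E c {x2,q}) = 0"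
    "(\<Sum>c\<in>{{x1,x3}, {x3,x4}, {x4,x6}}. a c * lam V E c {x3,r}) = 0" "(\<Sum>c\<in>{{x1,x3}, {x3,x4}, {x4,x6}}. a c * lam V E c {x4,p}) = 0"
    "(\<Sum>c\<in>{{x1,x3}, {x3,x4}, {x4,x6}}. a c * lam V E c {x5,q}) = 0" "(\<Sum>c\<in>{{x1,x3}, {x3,x4}, {x4,x6}}. a c * lam V E c {x6,r}) = 0"
    using H by blast+
  then have eqs: "a {x1,x3} = 0 \<and> a {x3,x4} = 0 \<and> a {x4,x6} = 0"
    by (simp add: lam_pend facts doubleton_eq_iff)
  then show "\<forall>c\<in>{{x1,x3}, {x3,x4}, {x4,x6}}. a c = 0" by simp
qed

lemma indTri: "rep_indep (lam V E) {{x1,x2}, {x2,x3}, {x3,x1}, {x4,x5}, {x5,x6}, {x6,x4}}"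
  unfolding rep_indep_def
proof (intro allI impI)
  fix a assume H: "\<forall>i. (\<Sum>c\<in>{{x1,x2}, {x2,x3}, {x3,x1}, {x4,x5}, {x5,x6}, {x6,x4}}. a c * lam V E c i) = 0"
  have "(\<Sum>c\<in>{{x1,x2}, {x2,x3}, {x3,x1}, {x4,x5}, {x5,x6}, {x6,x4}}. a c * lam V E c {x1,p}) = 0" "(\<Sum>c\<in>{{x1,x2}, {x2,x3}, {x3,x1}, {x4,x5}, {x5,x6}, {x6,x4}}. a c * lam V E c {x2,q}) = 0"
    "(\<Sum>c\<in>{{x1,x2}, {x2,x3}, {x3,x1}, {x4,x5}, {x5,x6}, {x6,x4}}. a c * lam V E c {x3,r}) = 0" "(\<Sum>c\<in>{{x1,x2}, {x2,x3}, {x3,x1}, {x4,x5}, {x5,x6}, {x6,x4}}. a c * lam V E c {x4,p}) = 0"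
    "(\<Sum>c\<in>{{x1,x2}, {x2,x3}, {x3,x1}, {x4,x5}, {x5,x6}, {x6,x4}}. a c * lam V E c {x5,q}) = 0" "(\<Sum>c\<in>{{x1,x2}, {x2,x3}, {x3,x1}, {x4,x5}, {x5,x6}, {x6,x4}}. a c * lam V E c {x6,r}) = 0"
    using H by blast+
  then have eqs: "a {x1,x2} = 0 \<and> a {x2,x3} = 0 \<and> a {x3,x1} = 0 \<and> a {x4,x5} = 0 \<and> a {x5,x6} = 0 \<and> a {x6,x4} = 0"
    by (simp add: lam_pend facts doubleton_eq_iff)
  then show "\<forall>c\<in>{{x1,x2}, {x2,x3}, {x3,x1}, {x4,x5}, {x5,x6}, {x6,x4}}. a c = 0" by simp
qed

definition "Tri = {{x1,x2}, {x2,x3}, {x3,x1}, {x4,x5}, {x5,x6}, {x6,x4}}"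

lemma finX: "finite X" using finV leafD finite_subset by (metis subsetI)
lemma fin_cords: "finite (cords X)"
proof -
  have "cords X \<subseteq> Pow X" unfolding cords_def by auto
  then show ?thesis using finX finite_subset by blast
qed

lemma subs: "L1 \<subseteq> cords X" "L2 \<subseteq> cords X" "Tri \<subseteq> cords X"
  unfolding L1_def L2_def Tri_def cords_def using inX ne by blast+

lemma L1m: "c \<in> L1 \<Longrightarrow> rep_indep (lam V E) (L1 - {c})"
  unfolding L1_def
  apply (elim insertE emptyE)
  apply (simp_all add: insert_Diff_if doubleton_eq_iff ne indL1_0 indL1_1 indL1_2 indL1_3 indL1_4 indL1_5)
  done

lemma L2m: "c \<in> L2 \<Longrightarrow> rep_indep (lam V E) (L2 - {c})"
  unfolding L2_def
  apply (elim insertE emptyE)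
  apply (simp_all add: insert_Diff_if doubleton_eq_iff ne indL2_0 indL2_1 indL2_2 indL2_3)
  done

lemma circ_gen: assumes "C \<subseteq> cords X" "\<not> rep_indep (lam V E) C" "\<And>c. c \<in> C \<Longrightarrow> rep_indep (lam V E) (C - {c})"
  shows "M_circuit V E X C"
  unfolding M_circuit_def M_indep_def
proof (intro conjI allI impI)
  show "C \<subseteq> cords X" by fact
  show "\<not> (C \<subseteq> cords X \<and> rep_indep (lam V E) C)" using assms by blast
  fix D assume D: "D \<subset> C"
  then show "D \<subseteq> cords X" using assms by blast
  obtain c where c: "c \<in> C" "c \<notin> D" using D by blast
  have "finite C" using assms(1) fin_cords finite_subset by blast
  then show "rep_indep (lam V E) D"
    using rep_indep_mono[OF assms(3)[OF c(1)]] c D by blast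
qed

lemma L1circ: "M_circuit V E X L1" using circ_gen[OF subs(1) L1dep L1m] by blast
lemma L2circ: "M_circuit V E X L2" using circ_gen[OF subs(2) L2dep L2m] by blast

lemma symd: "(L1 - L2) \<union> (L2 - L1) = Tri"
proof -
  have a: "L1 - L2 = {{x1,x2},{x2,x3},{x4,x5},{x5,x6}}"
    unfolding L1_def L2_def using ne by (simp add: insert_Diff_if doubleton_eq_iff)
  have b: "L2 - L1 = {{x1,x3},{x4,x6}}"
    unfolding L1_def L2_def using ne by (simp add: insert_Diff_if doubleton_eq_iff)
  show ?thesis unfolding a b Tri_def by (auto simp: insert_commute)
qed

lemma Tri_indep: "M_indep V E X Tri" unfolding M_indep_def using subs indTri by (simp add: Tri_def)

lemma notbin: "\<not> M_binary V E X"
proof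
  assume "M_binary V E X"
  then obtain phi :: "'v set \<Rightarrow> nat \<Rightarrow> bit" where
    phi: "\<And>S. S \<subseteq> cords X \<Longrightarrow> M_indep V E X S \<longleftrightarrow> rep_indep phi S"
    unfolding M_binary_def by blast
  have cs: "\<forall>i. (\<Sum>c\<in>C. phi c i) = 0" if C: "M_circuit V E X C" for C
  proof (rule circ_sum)
    have sub: "C \<subseteq> cords X" using C unfolding M_circuit_def by blast
    then show "finite C" using fin_cords finite_subset by blast
    show "\<not> rep_indep phi C" using C phi[OF sub] unfolding M_circuit_def by blast
    show "\<forall>c\<in>C. rep_indep phi (C - {c})"
    proof
      fix c assume "c \<in> C"
      then have "C - {c} \<subset> C" by blast
      then have "M_indep V E X (C - {c})" using C unfolding M_circuit_def by blast
      then show "rep_indep phi (C - {c})" using phi sub by blast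
    qed
  qed
  have f1: "finite L1" "finite L2" using subs fin_cords finite_subset by blast+
  have sums: "(\<Sum>c\<in>Tri. phi c i) = 0" for i
    using bit_symdiff[OF f1, of "\<lambda>c. phi c i"] cs[OF L1circ] cs[OF L2circ] symd by simp
  have "\<not> rep_indep phi Tri"
  proof
    assume H: "rep_indep phi Tri"
    have "\<forall>i. (\<Sum>c\<in>Tri. (\<lambda>_. 1::bit) c * phi c i) = 0" using sums by (simp del: mult_bit_eq_and add_bit_eq_xor)
    moreover have "{x1,x2} \<in> Tri" by (simp add: Tri_def)
    moreover have "(\<forall>i. (\<Sum>c\<in>Tri. (\<lambda>_. 1::bit) c * phi c i) = 0) \<longrightarrow> (\<forall>c\<in>Tri. (\<lambda>_. 1::bit) c = 0)"
      using H unfolding rep_indep_def by (rule spec)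
    ultimately show False by (metis one_neq_zero)
  qed
  then show False using phi[OF subs(3)] Tri_indep by blast
qed

end


context xtree begin

lemma longest: assumes "Pr ps0" "\<And>ps. Pr ps \<Longrightarrow> is_path V E ps"
  shows "\<exists>ps. Pr ps \<and> (\<forall>qs. Pr qs \<longrightarrow> length qs \<le> length ps)"
proof -
  have bound: "length ps \<le> card V" if "Pr ps" for ps
  proof -
    have "is_path V E ps" using assms(2) that .
    then have "distinct ps" "set ps \<subseteq> V" unfolding is_path_def by auto
    then show ?thesis using finV card_mono distinct_card by metis
  qed
  show ?thesis
    using ex_has_greatest_nat[of Pr ps0 length "Suc (card V)"] assms(1) bound
    by (meson le_imp_less_Suc)
qed

lemma deg3_other: assumes "v \<in> V" "degree E v = 3"
  shows "\<exists>t. {v,t} \<in> E \<and> t \<noteq> v \<and> t \<noteq> u \<and> t \<noteq> w"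
proof -
  have c2: "card {{v,u},{v,w}} \<le> 2" by (simp add: card_insert_le_m1)
  have "\<not> {e\<in>E. v \<in> e} \<subseteq> {{v,u},{v,w}}"
  proof
    assume "{e\<in>E. v \<in> e} \<subseteq> {{v,u},{v,w}}"
    then have "card {e\<in>E. v \<in> e} \<le> card {{v,u},{v,w}}" by (rule card_mono[rotated]) simp
    then show False using c2 assms(2) unfolding degree_def by simp
  qed
  then obtain e where e: "e \<in> E" "v \<in> e" "e \<noteq> {v,u}" "e \<noteq> {v,w}" by blast
  obtain t where "t \<noteq> v" "e = {v,t}" using edge_other e by blast
  then show ?thesis using e by blast
qed

lemma leaf_or3: assumes "is_binary_X_tree V E X" "v \<in> V" shows "v \<in> X \<or> degree E v = 3"
  using assms unfolding is_binary_X_tree_def by blast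

lemma nleaf: assumes "v \<in> V" "degree E v \<noteq> 1" shows "v \<notin> X"
  using assms leafD by auto

lemma branch: assumes bin: "is_binary_X_tree V E X" and ca: "{c,a} \<in> E" and aX: "a \<notin> X"
  shows "\<exists>Q z t. is_path V E Q \<and> Suc (Suc 0) \<le> length Q \<and> Q!0 = c \<and> Q!Suc 0 = a \<and>
     z \<in> X \<and> t \<in> X \<and> z \<noteq> t \<and> {last Q, z} \<in> E \<and> {last Q, t} \<in> E"
proof -
  define Pr where "Pr Q \<longleftrightarrow> is_path V E Q \<and> Suc (Suc 0) \<le> length Q \<and> Q!0 = c \<and> Q!Suc 0 = a" for Q
  have "Pr [c,a]" unfolding Pr_def using path_two[OF ca] by simp
  then obtain Q where Q: "Pr Q" and mx: "\<And>Q'. Pr Q' \<Longrightarrow> length Q' \<le> length Q"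
    using longest[of Pr] unfolding Pr_def by blast
  have Qp: "is_path V E Q" and l2: "Suc (Suc 0) \<le> length Q" and Q0: "Q!0 = c" and Q1: "Q!Suc 0 = a"
    using Q unfolding Pr_def by auto
  define n where "n = length Q"
  have setV: "set Q \<subseteq> V" and dQ: "distinct Q" using Qp unfolding is_path_def by auto
  have nthV: "i < n \<Longrightarrow> Q!i \<in> V" for i using setV n_def by auto
  have "Q \<noteq> []" using l2 by auto
  then have lastQ: "last Q = Q!(n - 1)" using n_def by (simp add: last_conv_nth)
  have noext: False if t: "t \<in> V" "t \<notin> set Q" "{last Q, t} \<in> E" for t
  proof -
    have "is_path V E (Q @ [t])" using path_snoc[OF Qp t] .
    moreover have "(Q @ [t])!0 = c" "(Q @ [t])!Suc 0 = a" using Q0 Q1 l2 by (auto simp: nth_append)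
    ultimately have "Pr (Q @ [t])" unfolding Pr_def using l2 by simp
    then show False using mx by fastforce
  qed
  have zX: "Q!(n-1) \<in> X"
  proof (rule ccontr)
    assume nz: "Q!(n-1) \<notin> X"
    have zV: "Q!(n-1) \<in> V" using nthV l2 n_def by simp
    then have "degree E (Q!(n-1)) = 3" using leaf_or3[OF bin] nz by blast
    then obtain t where t: "{Q!(n-1), t} \<in> E" "t \<noteq> Q!(n-1)" "t \<noteq> Q!(n-2)"
      using deg3_other[OF zV] by blast
    have tV: "t \<in> V" using edge_V t(1) by blast
    show False
    proof (cases "t \<in> set Q")
      case True
      then obtain m where m: "m < n" "Q!m = t" using n_def by (metis in_set_conv_nth)
      have "m \<noteq> n - 1" using m t by auto
      then have "m < n - 1" using m by simp
      then have "n - 1 = Suc m" using cycle[OF Qp, of m "n-1"] t m n_def l2 by (simp add: insert_commute)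
      then show False using m t by (metis diff_Suc_1 diff_diff_left one_add_one plus_1_eq_Suc)
    next
      case False
      then show False using noext[OF tV False] t lastQ by simp
    qed
  qed
  have n3: "Suc (Suc 0) < n"
  proof (rule ccontr)
    assume "\<not> ?thesis"
    then have "n = 2" using l2 n_def by simp
    then show False using zX Q1 aX by simp
  qed
  define y where "y = Q!(n-2)"
  have sn: "Suc (n-2) = n-1" using n3 by simp
  have yz: "{y, Q!(n-1)} \<in> E" unfolding y_def using path_edge[OF Qp, of "n-2"] n3 n_def sn
    by simp
  have yV: "y \<in> V" using edge_V yz by blast
  have ydeg: "degree E y \<noteq> 1"
  proof
    assume "degree E y = 1"
    then have "n - 2 = 0 \<or> n - 2 = length Q - 1" using leaf_not_interior[OF Qp, of y "n-2"] n_def n3 y_def by simp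
    then show False using n3 n_def by simp
  qed
  have y3: "degree E y = 3" using leaf_or3[OF bin yV] nleaf[OF yV ydeg] by blast
  obtain t where t: "{y,t} \<in> E" "t \<noteq> y" "t \<noteq> Q!(n-3)" "t \<noteq> Q!(n-1)"
    using deg3_other[OF yV y3] by blast
  have tV: "t \<in> V" using edge_V t(1) by blast
  define Q' where "Q' = take (n-1) Q @ [t]"
  have tQ: "t \<notin> set Q"
  proof
    assume "t \<in> set Q"
    then obtain m where m: "m < n" "Q!m = t" using n_def by (metis in_set_conv_nth)
    have "m \<noteq> n - 1" "m \<noteq> n - 2" "m \<noteq> n - 3" using m t y_def by auto
    then have "m < n - 2" using m by linarith
    then have "n - 2 = Suc m" using cycle[OF Qp, of m "n-2"] t m n_def y_def by (simp add: insert_commute)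
    then show False using \<open>m \<noteq> n - 3\<close> by linarith
  qed
  have tk: "take (n-1) Q \<noteq> []" using n3 n_def by auto
  have lastk: "last (take (n-1) Q) = y"
  proof -
    have "length (take (n-1) Q) = n - 1" using n_def by simp
    then have "last (take (n-1) Q) = (take (n-1) Q) ! (n-2)" using tk last_conv_nth[OF tk] sn
      by (metis diff_Suc_1)
    also have "\<dots> = Q!(n-2)" using n3 by simp
    finally show ?thesis by (simp add: y_def)
  qed
  have pk: "is_path V E (take (n-1) Q)" using path_take[OF Qp] n3 by simp
  have pQ': "is_path V E Q'" unfolding Q'_def
    using path_snoc[OF pk tV] tQ in_set_takeD lastk t(1) by fastforce
  have tX: "t \<in> X"
  proof (rule ccontr)
    assume "t \<notin> X"
    then have "degree E t = 3" using leaf_or3[OF bin tV] by blast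
    then obtain t' where t': "{t,t'} \<in> E" "t' \<noteq> t" "t' \<noteq> y"
      using deg3_other[OF tV, of y y] by blast
    have t'V: "t' \<in> V" using edge_V t'(1) by blast
    have lQ': "length Q' = n" "Q'!(n-1) = t" "Q'!(n-2) = y" "last Q' = t" using n3 n_def y_def
      by (auto simp: Q'_def nth_append)
    show False
    proof (cases "t' \<in> set Q'")
      case True
      then obtain m where m: "m < n" "Q'!m = t'" using lQ' by (metis in_set_conv_nth)
      have "m \<noteq> n - 1" "m \<noteq> n - 2" using m t' lQ' by auto
      then have "m < n - 1" using m by linarith
      then have "n - 1 = Suc m" using cycle[OF pQ', of m "n-1"] t' m lQ' by (simp add: insert_commute)
      then show False using \<open>m \<noteq> n - 2\<close> by linarith
    next
      case False
      have "is_path V E (Q' @ [t'])" using path_snoc[OF pQ' t'V False] lQ' t' by simp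
      moreover have "(Q' @ [t'])!0 = c" "(Q' @ [t'])!Suc 0 = a" using Q0 Q1 n3 n_def
        by (auto simp: nth_append Q'_def)
      ultimately have "Pr (Q' @ [t'])" unfolding Pr_def using lQ' n3 by simp
      then show False using mx lQ' n_def by fastforce
    qed
  qed
  have "Pr (take (n-1) Q)" unfolding Pr_def using pk n3 Q0 Q1 n_def by auto
  moreover have "Q!(n-1) \<noteq> t" using t by simp
  ultimately show ?thesis using zX tX yz t(1) lastk unfolding Pr_def by blast
qed

lemma center: assumes bin: "is_binary_X_tree V E X" and nc: "\<not> is_caterpillar V E X"
  shows "\<exists>c a1 a2 a3. {c,a1} \<in> E \<and> {c,a2} \<in> E \<and> {c,a3} \<in> E \<and> a1 \<notin> X \<and> a2 \<notin> X \<and> a3 \<notin> X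
     \<and> a1 \<noteq> a2 \<and> a1 \<noteq> a3 \<and> a2 \<noteq> a3"
proof -
  have nc': "\<exists>u\<in>V-X. u \<notin> set ps" if "is_path V E ps" for ps
    using nc bin that unfolding is_caterpillar_def by blast
  obtain v0 where "v0 \<in> V" using tree unfolding is_tree_def by blast
  then obtain u0 where u0: "u0 \<in> V - X" using nc'[OF path_one] by blast
  define Pr where "Pr ps \<longleftrightarrow> is_path V E ps \<and> set ps \<subseteq> V - X" for ps
  have "Pr [u0]" unfolding Pr_def using u0 path_one by auto
  then obtain P where P: "Pr P" and mx: "\<And>Q. Pr Q \<Longrightarrow> length Q \<le> length P"
    using longest[of Pr] unfolding Pr_def by blast
  have Pp: "is_path V E P" and PX: "set P \<subseteq> V - X" using P unfolding Pr_def by auto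
  have Pne: "P \<noteq> []" and dP: "distinct P" using Pp unfolding is_path_def by auto
  obtain u where u: "u \<in> V - X" "u \<notin> set P" using nc'[OF Pp] by blast
  have aV: "hd P \<in> V" using path_hd_V[OF Pp] by simp
  obtain R where R: "is_path V E R" "hd R = u" "last R = hd P" using path_ex[of u "hd P"] u aV by blast
  have Rne: "R \<noteq> []" using R unfolding is_path_def by auto
  define Pj where "Pj j \<longleftrightarrow> j < length R \<and> R!j \<in> set P" for j
  have "Pj (length R - 1)" unfolding Pj_def using R Rne Pne by (metis last_conv_nth hd_in_set diff_less length_greater_0_conv zero_less_one)
  then have "\<exists>j. Pj j" by blast
  define j where "j = (LEAST j. Pj j)"
  have hj: "Pj j" unfolding j_def using LeastI_ex[OF \<open>\<exists>j. Pj j\<close>] .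
  have j0: "j \<noteq> 0"
  proof
    assume "j = 0"
    then have "R!0 \<in> set P" using hj unfolding Pj_def by simp
    then show False using R(2) Rne u by (simp add: hd_conv_nth)
  qed
  define w where "w = R!(j-1)"
  have jl: "j < length R" "R!j \<in> set P" using hj unfolding Pj_def by auto
  have wP: "w \<notin> set P"
  proof
    assume "w \<in> set P"
    then have "Pj (j-1)" unfolding Pj_def w_def using jl by simp
    then have "j \<le> j - 1" unfolding j_def by (rule Least_le)
    then show False using j0 by simp
  qed
  have wV: "w \<in> V" using R(1) jl unfolding is_path_def w_def by auto
  have wX: "w \<notin> X"
  proof
    assume "w \<in> X"
    then have "degree E w = 1" using leafD by simp
    then have "j - 1 = 0 \<or> j - 1 = length R - 1" using leaf_not_interior[OF R(1), of w "j-1"] jl w_def by simp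
    then show False
    proof
      assume "j - 1 = 0"
      then have "w = u" using R(2) Rne w_def by (simp add: hd_conv_nth)
      then show False using u \<open>w \<in> X\<close> by simp
    next
      assume "j - 1 = length R - 1" then show False using jl j0 by simp
    qed
  qed
  have wq: "{w, R!j} \<in> E" using path_edge[OF R(1), of "j-1"] jl j0 w_def by simp
  obtain k where k: "k < length P" "P!k = R!j" using jl by (metis in_set_conv_nth)
  have "\<not> (k = 0)"
  proof
    assume "k = 0"
    then have "{w, hd P} \<in> E" using wq k Pne by (simp add: hd_conv_nth)
    then have "Pr (w # P)" unfolding Pr_def using path_cons[OF Pp wV wP] PX wV wX by simp
    then show False using mx by fastforce
  qed
  moreover have "\<not> (k = length P - 1)"
  proof
    assume "k = length P - 1"
    then have "{last P, w} \<in> E" using wq k Pne by (simp add: last_conv_nth insert_commute)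
    then have "Pr (P @ [w])" unfolding Pr_def using path_snoc[OF Pp wV wP] PX wV wX by simp
    then show False using mx by fastforce
  qed
  ultimately have k1: "0 < k" "Suc k < length P" using k by auto
  have e1: "{P!(k-1), P!k} \<in> E" using path_edge[OF Pp, of "k-1"] k1 by simp
  have e2: "{P!k, P!Suc k} \<in> E" using path_edge[OF Pp, of k] k1 by simp
  have m1: "P!(k-1) \<in> set P" "P!Suc k \<in> set P" using k1 by (simp_all add: nth_mem)
  have n1: "P!(k-1) \<notin> X" "P!Suc k \<notin> X" using PX m1 by blast+
  have d12: "P!(k-1) \<noteq> P!Suc k" using dP k1 by (simp add: nth_eq_iff_index_eq)
  have d3: "w \<noteq> P!(k-1)" "w \<noteq> P!Suc k" using wP m1 by blast+
  show ?thesis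
    apply (rule exI[of _ "P!k"], rule exI[of _ "P!(k-1)"], rule exI[of _ "P!Suc k"], rule exI[of _ w])
    using e1 e2 wq k n1 d12 d3 wX by (simp add: insert_commute)
qed

lemma diffnb: assumes "z \<in> X" "z' \<in> X" "{y,z} \<in> E" "{y',z'} \<in> E" "y \<noteq> y'" shows "z \<noteq> z'"
proof
  assume "z = z'"
  then show False using leaf_nb[of z y y'] leafD[OF assms(1)] assms by (simp add: insert_commute)
qed

lemma three_cherries: assumes bin: "is_binary_X_tree V E X" and nc: "\<not> is_caterpillar V E X"
  shows "\<exists>x1 x2 x3 x4 x5 x6. x1 \<in> X \<and> x2 \<in> X \<and> x3 \<in> X \<and> x4 \<in> X \<and> x5 \<in> X \<and> x6 \<in> X \<and>
       distinct [x1, x2, x3, x4, x5, x6] \<and>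
       is_cherry E x1 x4 \<and> is_cherry E x2 x5 \<and> is_cherry E x3 x6"
proof -
  obtain c a1 a2 a3 where C: "{c,a1} \<in> E" "{c,a2} \<in> E" "{c,a3} \<in> E" "a1 \<notin> X" "a2 \<notin> X" "a3 \<notin> X"
     "a1 \<noteq> a2" "a1 \<noteq> a3" "a2 \<noteq> a3" using center[OF bin nc] by blast
  obtain Q1 z1 t1 where B1: "is_path V E Q1" "Suc (Suc 0) \<le> length Q1" "Q1!0 = c" "Q1!Suc 0 = a1"
     "z1 \<in> X" "t1 \<in> X" "z1 \<noteq> t1" "{last Q1, z1} \<in> E" "{last Q1, t1} \<in> E"
    using branch[OF bin C(1) C(4)] by blast
  obtain Q2 z2 t2 where B2: "is_path V E Q2" "Suc (Suc 0) \<le> length Q2" "Q2!0 = c" "Q2!Suc 0 = a2"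
     "z2 \<in> X" "t2 \<in> X" "z2 \<noteq> t2" "{last Q2, z2} \<in> E" "{last Q2, t2} \<in> E"
    using branch[OF bin C(2) C(5)] by blast
  obtain Q3 z3 t3 where B3: "is_path V E Q3" "Suc (Suc 0) \<le> length Q3" "Q3!0 = c" "Q3!Suc 0 = a3"
     "z3 \<in> X" "t3 \<in> X" "z3 \<noteq> t3" "{last Q3, z3} \<in> E" "{last Q3, t3} \<in> E"
    using branch[OF bin C(3) C(6)] by blast
  have yd: "last Qa \<noteq> last Qb" if "is_path V E Qa" "Suc (Suc 0) \<le> length Qa" "Qa!0 = c" "Qa!Suc 0 = aa"
    "is_path V E Qb" "Suc (Suc 0) \<le> length Qb" "Qb!0 = c" "Qb!Suc 0 = ab" "aa \<noteq> ab" for Qa Qb aa ab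
  proof
    assume "last Qa = last Qb"
    moreover have "hd Qa = hd Qb" using that by (metis hd_conv_nth list.size(3) not_less_eq_eq zero_le)
    ultimately have "Qa = Qb" using path_uniq that by blast
    then show False using that by simp
  qed
  have y12: "last Q1 \<noteq> last Q2" using yd[OF B1(1-4) B2(1-4) C(7)] .
  have y13: "last Q1 \<noteq> last Q3" using yd[OF B1(1-4) B3(1-4) C(8)] .
  have y23: "last Q2 \<noteq> last Q3" using yd[OF B2(1-4) B3(1-4) C(9)] .
  have ch: "is_cherry E z t" if "z \<noteq> t" "{y,z} \<in> E" "{y,t} \<in> E" for y z t
    unfolding is_cherry_def using that by blast
  show ?thesis
    apply (rule exI[of _ z1], rule exI[of _ z2], rule exI[of _ z3], rule exI[of _ t1], rule exI[of _ t2], rule exI[of _ t3])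
    using B1 B2 B3 y12 y13 y23 ch
      diffnb[OF B1(5) B2(5) B1(8) B2(8) y12] diffnb[OF B1(5) B2(6) B1(8) B2(9) y12]
      diffnb[OF B1(6) B2(5) B1(9) B2(8) y12] diffnb[OF B1(6) B2(6) B1(9) B2(9) y12]
      diffnb[OF B1(5) B3(5) B1(8) B3(8) y13] diffnb[OF B1(5) B3(6) B1(8) B3(9) y13]
      diffnb[OF B1(6) B3(5) B1(9) B3(8) y13] diffnb[OF B1(6) B3(6) B1(9) B3(9) y13]
      diffnb[OF B2(5) B3(5) B2(8) B3(8) y23] diffnb[OF B2(5) B3(6) B2(8) B3(9) y23]
      diffnb[OF B2(6) B3(5) B2(9) B3(8) y23] diffnb[OF B2(6) B3(6) B2(9) B3(9) y23]
    by auto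
qed

end

theorem mainTheorem12:
  fixes V :: "'v set" and E :: "'v set set" and X :: "'v set"
  assumes T: "is_X_tree V E X" and n3: "card X \<ge> 3"
  shows
    "(\<forall>x1 x2 x3 x4 x5 x6.
       x1 \<in> X \<and> x2 \<in> X \<and> x3 \<in> X \<and> x4 \<in> X \<and> x5 \<in> X \<and> x6 \<in> X \<and>
       distinct [x1, x2, x3, x4, x5, x6] \<and>
       is_cherry E x1 x4 \<and> is_cherry E x2 x5 \<and> is_cherry E x3 x6 \<longrightarrow>
       (let L1 = {{x1,x2}, {x2,x3}, {x3,x4}, {x4,x5}, {x5,x6}, {x6,x1}};
            L2 = {{x1,x3}, {x3,x4}, {x4,x6}, {x6,x1}}
        in M_circuit V E X L1 \<and> M_circuit V E X L2 \<and>
           (L1 - L2) \<union> (L2 - L1) = {{x1,x2}, {x2,x3}, {x3,x1}, {x4,x5}, {x5,x6}, {x6,x4}} \<and>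
           M_indep V E X ((L1 - L2) \<union> (L2 - L1)) \<and>
           \<not> M_binary V E X)) \<and>
    (is_binary_X_tree V E X \<and> M_binary V E X \<longrightarrow> is_caterpillar V E X)"
proof -
  interpret xtree V E X using T by unfold_locales
  have P1: "(let L1 = {{x1,x2}, {x2,x3}, {x3,x4}, {x4,x5}, {x5,x6}, {x6,x1}};
            L2 = {{x1,x3}, {x3,x4}, {x4,x6}, {x6,x1}}
        in M_circuit V E X L1 \<and> M_circuit V E X L2 \<and>
           (L1 - L2) \<union> (L2 - L1) = {{x1,x2}, {x2,x3}, {x3,x1}, {x4,x5}, {x5,x6}, {x6,x4}} \<and>
           M_indep V E X ((L1 - L2) \<union> (L2 - L1)) \<and>
           \<not> M_binary V E X)"
    if H: "x1 \<in> X" "x2 \<in> X" "x3 \<in> X" "x4 \<in> X" "x5 \<in> X" "x6 \<in> X"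
       "distinct [x1, x2, x3, x4, x5, x6]"
       "is_cherry E x1 x4" "is_cherry E x2 x5" "is_cherry E x3 x6" for x1 x2 x3 x4 x5 x6
  proof -
    have V: "x1 \<in> V" "x2 \<in> V" "x3 \<in> V" "x4 \<in> V" "x5 \<in> V" "x6 \<in> V" using H leafD by auto
    obtain p where p: "{x1,p} \<in> E" "{x4,p} \<in> E" using cherry_nb[OF H(1,4) V(2) _ _ H(8)] H(7) by auto
    obtain q where q: "{x2,q} \<in> E" "{x5,q} \<in> E" using cherry_nb[OF H(2,5) V(1) _ _ H(9)] H(7) by auto
    obtain r where r: "{x3,r} \<in> E" "{x6,r} \<in> E" using cherry_nb[OF H(3,6) V(1) _ _ H(10)] H(7) by auto
    interpret six V E X x1 x2 x3 x4 x5 x6 p q r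
      using H p q r by unfold_locales auto
    show ?thesis unfolding Let_def
      using L1circ L2circ symd Tri_indep notbin unfolding L1_def L2_def Tri_def by simp
  qed
  show ?thesis
  proof (intro conjI allI impI)
    fix x1 x2 x3 x4 x5 x6
    assume "x1 \<in> X \<and> x2 \<in> X \<and> x3 \<in> X \<and> x4 \<in> X \<and> x5 \<in> X \<and> x6 \<in> X \<and>
       distinct [x1, x2, x3, x4, x5, x6] \<and>
       is_cherry E x1 x4 \<and> is_cherry E x2 x5 \<and> is_cherry E x3 x6"
    then show "let L1 = {{x1,x2}, {x2,x3}, {x3,x4}, {x4,x5}, {x5,x6}, {x6,x1}};
            L2 = {{x1,x3}, {x3,x4}, {x4,x6}, {x6,x1}}
        in M_circuit V E X L1 \<and> M_circuit V E X L2 \<and>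
           (L1 - L2) \<union> (L2 - L1) = {{x1,x2}, {x2,x3}, {x3,x1}, {x4,x5}, {x5,x6}, {x6,x4}} \<and>
           M_indep V E X ((L1 - L2) \<union> (L2 - L1)) \<and>
           \<not> M_binary V E X" using P1 by blast
  next
    assume A: "is_binary_X_tree V E X \<and> M_binary V E X"
    show "is_caterpillar V E X"
    proof (rule ccontr)
      assume "\<not> is_caterpillar V E X"
      then obtain x1 x2 x3 x4 x5 x6 where "x1 \<in> X \<and> x2 \<in> X \<and> x3 \<in> X \<and> x4 \<in> X \<and> x5 \<in> X \<and> x6 \<in> X \<and>
       distinct [x1, x2, x3, x4, x5, x6] \<and>
       is_cherry E x1 x4 \<and> is_cherry E x2 x5 \<and> is_cherry E x3 x6"
        using three_cherries A by blast
      then have "\<not> M_binary V E X" using P1[of x1 x2 x3 x4 x5 x6] by (simp add: Let_def)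
      then show False using A by blast
    qed
  qed
qed


end
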